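(* Let $\mathcal{A}=(a_i)_{i=1}^\infty$ be a weakly increasing sequence of positive integers, and let $u,v$ be positive real numbers with $u>v$. If $k\geq 2$ and $\gcd(a_1,\ldots,a_k)=1$, then $$p_\mathcal{A}(un,k)^2>p_\mathcal{A}(un+vn,k)\,p_\mathcal{A}(un-vn,k)$$ holds for every $n>\frac{4u}{kv^2}\prod_{i=1}^k(1+iDk)$ such that $un$, $un+vn$ and $un-vn$ are integers, where $D=\operatorname{lcm}(a_1,\ldots,a_k)$.
   Context: For a weakly increasing sequence $\mathcal{A}=(a_i)_{i\ge1}$ of positive integers and a positive integer $k$, the restricted partition function $p_\mathcal{A}(n,k)$ is defined by $\sum_{n\ge0}p_\mathcal{A}(n,k)x^n=\prod_{i=1}^k(1-x^{a_i})^{-1}$; equivalently, it counts the partitions of $n$ whose parts lie in the multiset $\{a_1,\ldots,a_k\}$ (equal values with different indices count as distinct colors). Also $p_\mathcal{A}(n,k)=0$ for $n<0$. *)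

theory Defs
  imports "HOL-Computational_Algebra.Formal_Power_Series"
begin

text \<open>Restricted partition function p_A(m,k): the m-th coefficient of
  prod_{i=1..k} (1 - x^(a_i))^(-1), and 0 for negative m.
  The sequence a is indexed from 1 (a 0 is irrelevant).\<close>
definition pA :: "(nat \<Rightarrow> nat) \<Rightarrow> int \<Rightarrow> nat \<Rightarrow> real" where
  "pA a m k = (if m < 0 then 0
     else fps_nth (\<Prod>i\<in>{1..k}. inverse (1 - (fps_X :: real fps) ^ a i)) (nat m))"

end

theory Submission
  imports Defs
begin

unbundle fps_syntax


definition qf :: "nat \<Rightarrow> nat \<Rightarrow> real fps" where
  "qf a D = Abs_fps (\<lambda>t. if a dvd t \<and> t < D then 1 else 0)"

lemma qf_mult:
  assumes "0 < a" "a dvd D" "0 < D"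
  shows "(1 - fps_X ^ a) * qf a D = 1 - fps_X ^ D"
proof (rule fps_ext)
  fix t
  have aD: "a \<le> D" using assms by (simp add: dvd_imp_le)
  have c1: "t \<ge> D + a" if "a dvd t" "t > D"
  proof -
    have "a dvd (t - D)" using that assms by (simp add: dvd_diff_nat)
    moreover have "t - D > 0" using that by simp
    ultimately have "t - D \<ge> a" by (simp add: dvd_imp_le)
    thus ?thesis using that by linarith
  qed
  have e: "((1 - fps_X ^ a) * qf a D) $ t = qf a D $ t - (fps_X ^ a * qf a D) $ t"
    by (simp add: algebra_simps)
  have r: "(1 - fps_X ^ D :: real fps) $ t = (if t = 0 then 1 else 0) - (if t = D then 1 else 0)"
    by simp
  have l: "qf a D $ t - (fps_X ^ a * qf a D) $ t = (if a dvd t \<and> t < D then 1 else 0)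
      - (if t < a then 0 else (if a dvd (t - a) \<and> t - a < D then 1 else 0))"
    by (simp add: qf_def fps_X_power_mult_nth)
  have "(if a dvd t \<and> t < D then 1 else 0)
      - (if t < a then 0 else (if a dvd (t - a) \<and> t - a < D then 1 else 0)) = 
    (if t = 0 then 1 else 0) - (if t = D then 1 else (0::real))"
  proof (cases "t = 0")
    case True thus ?thesis using assms by (simp add: qf_def)
  next
    case t0: False
    show ?thesis
    proof (cases "t < a")
      case True
      hence "\<not> a dvd t" using t0 by (auto dest: dvd_imp_le)
      thus ?thesis using True t0 aD by auto
    next
      case ta: False
      have iff: "a dvd (t - a) \<longleftrightarrow> a dvd t" using ta
        by (metis dvd_diff_nat dvd_refl le_add_diff_inverse2 not_less dvd_add_left_iff)
      show ?thesis
      proof (cases "a dvd t")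
        case False
        hence "t \<noteq> D" using assms by auto
        thus ?thesis using False iff ta t0 by simp
      next
        case True
        show ?thesis
        proof (cases "t < D")
          case True thus ?thesis using \<open>a dvd t\<close> iff ta t0 by auto
        next
          case False
          show ?thesis
          proof (cases "t = D")
            case True thus ?thesis using \<open>a dvd t\<close> iff ta t0 assms by auto
          next
            case False
            hence "t \<ge> D + a" using c1 \<open>a dvd t\<close> \<open>\<not> t < D\<close> by auto
            thus ?thesis using False \<open>a dvd t\<close> iff ta t0 by auto
          qed
        qed
      qed
    qed
  qed
  thus "((1 - fps_X ^ a) * qf a D) $ t = (1 - fps_X ^ D :: real fps) $ t"
    unfolding e r l .
qed

lemma inv_qf:
  assumes "0 < a" "a dvd D" "0 < D"
  shows "inverse (1 - fps_X ^ a :: real fps) = qf a D * inverse (1 - fps_X ^ D)"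
proof -
  have h0: "(1 - fps_X ^ a :: real fps) $ 0 \<noteq> 0" using assms by simp
  have h1: "(1 - fps_X ^ D :: real fps) $ 0 \<noteq> 0" using assms by simp
  have "inverse (1 - fps_X ^ a :: real fps) = inverse (1 - fps_X ^ a) * ((1 - fps_X ^ D) * inverse (1 - fps_X ^ D))"
    using inverse_mult_eq_1'[OF h1] by simp
  also have "\<dots> = (inverse (1 - fps_X ^ a) * (1 - fps_X ^ a)) * qf a D * inverse (1 - fps_X ^ D)"
    unfolding qf_mult[OF assms, symmetric] by (simp add: mult.assoc)
  also have "\<dots> = qf a D * inverse (1 - fps_X ^ D)"
    using inverse_mult_eq_1[OF h0] by simp
  finally show ?thesis .
qed

lemma inv_conv:
  assumes D: "0 < D"
  shows "(f * inverse (1 - fps_X ^ D :: real fps)) $ m = (\<Sum>i\<le>m div D. f $ (m - D * i))"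
proof -
  define g where "g = Abs_fps (\<lambda>m. \<Sum>i\<le>m div D. f $ (m - D * i))"
  have "g * (1 - fps_X ^ D) = f"
  proof (rule fps_ext)
    fix m
    have e: "(g * (1 - fps_X ^ D)) $ m = g $ m - (fps_X ^ D * g) $ m" by (simp add: algebra_simps)
    show "(g * (1 - fps_X ^ D)) $ m = f $ m"
    proof (cases "m < D")
      case True thus ?thesis unfolding e by (simp add: g_def fps_X_power_mult_nth)
    next
      case False
      hence q: "m div D = Suc ((m - D) div D)" using D
        using le_div_geq[of D m] False by simp
      have "g $ m = f $ m + (\<Sum>i\<le>(m - D) div D. f $ (m - D * Suc i))"
        unfolding g_def fps_nth_Abs_fps q sum.atMost_Suc_shift by simp
      also have "(\<Sum>i\<le>(m - D) div D. f $ (m - D * Suc i)) = (\<Sum>i\<le>(m - D) div D. f $ (m - D - D * i))"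
        by (simp add: diff_diff_left)
      finally show ?thesis unfolding e using False by (simp add: g_def fps_X_power_mult_nth)
    qed
  qed
  have h1: "(1 - fps_X ^ D :: real fps) $ 0 \<noteq> 0" using assms by simp
  have "f * inverse (1 - fps_X ^ D) = g * ((1 - fps_X ^ D) * inverse (1 - fps_X ^ D))"
    using \<open>g * (1 - fps_X ^ D) = f\<close> by (simp add: mult.assoc)
  also have "\<dots> = g" using inverse_mult_eq_1'[OF h1] by simp
  finally show ?thesis by (simp add: g_def)
qed

lemma W_nth:
  assumes D: "0 < D"
  shows "(inverse (1 - fps_X ^ D :: real fps) ^ Suc K) $ m = (if D dvd m then of_nat ((m div D + K) choose K) else 0)"
proof (induction K arbitrary: m)
  case 0
  have "(inverse (1 - fps_X ^ D :: real fps) ^ Suc 0) $ m = (1 * inverse (1 - fps_X ^ D :: real fps)) $ m" by simp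
  also have "\<dots> = (\<Sum>i\<le>m div D. (1::real fps) $ (m - D * i))" by (rule inv_conv[OF D])
  also have "\<dots> = (\<Sum>i\<le>m div D. if i = m div D \<and> D dvd m then 1 else 0)"
  proof (rule sum.cong[OF refl])
    fix i assume "i \<in> {..m div D}"
    hence "D * i \<le> m" by (metis atMost_iff dvd_mult_div_cancel div_mult_self1_is_m mult.commute D div_le_mono  times_div_less_eq_dividend order_trans mult_le_mono2)
    hence "(m - D * i = 0) \<longleftrightarrow> (i = m div D \<and> D dvd m)" using D
      by (metis diff_is_0_eq dvd_triv_left le_antisym nonzero_mult_div_cancel_left not_gr0 dvd_mult_div_cancel)
    thus "(1::real fps) $ (m - D * i) = (if i = m div D \<and> D dvd m then 1 else 0)" by simp
  qed
  also have "\<dots> = (if D dvd m then 1 else 0)" by (cases "D dvd m") simp_all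
  finally show ?case by simp
next
  case (Suc K)
  define q where "q = m div D"
  have "(inverse (1 - fps_X ^ D :: real fps) ^ Suc (Suc K)) $ m = (inverse (1 - fps_X ^ D :: real fps) ^ Suc K * inverse (1 - fps_X ^ D)) $ m"
    by (simp only: power_Suc2)
  also have "\<dots> = (\<Sum>i\<le>q. (inverse (1 - fps_X ^ D :: real fps) ^ Suc K) $ (m - D * i))"
    unfolding q_def by (rule inv_conv[OF D])
  also have "\<dots> = (\<Sum>i\<le>q. if D dvd m then of_nat ((q - i + K) choose K) else 0)"
  proof (rule sum.cong[OF refl])
    fix i assume "i \<in> {..q}"
    hence le: "D * i \<le> m" unfolding q_def by (metis atMost_iff div_mult_self1_is_m mult.commute D div_le_mono times_div_less_eq_dividend order_trans mult_le_mono2)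
    have dv: "D dvd (m - D * i) \<longleftrightarrow> D dvd m" using le
      by (metis dvd_diff_nat dvd_triv_left le_add_diff_inverse dvd_add_right_iff)
    have "D dvd m \<Longrightarrow> (m - D * i) div D = q - i" unfolding q_def using D
      by (metis div_mult_self1_is_m mult.commute dvd_mult_div_cancel diff_mult_distrib2 nonzero_mult_div_cancel_left not_gr0)
    thus "(inverse (1 - fps_X ^ D :: real fps) ^ Suc K) $ (m - D * i) = (if D dvd m then of_nat ((q - i + K) choose K) else 0)"
      unfolding Suc.IH using dv by simp
  qed
  also have "\<dots> = (if D dvd m then of_nat ((q + Suc K) choose Suc K) else 0)"
  proof (cases "D dvd m")
    case True
    have "(\<Sum>i\<le>q. (q - i + K) choose K) = (\<Sum>i\<le>q. (i + K) choose K)"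
      by (rule sum.reindex_bij_witness[where i="\<lambda>i. q - i" and j="\<lambda>i. q - i"]) auto
    also have "\<dots> = (\<Sum>i\<le>q. (K + i) choose i)"
      by (rule sum.cong[OF refl]) (metis add.commute binomial_symmetric le_add2 add_diff_cancel_right')
    also have "\<dots> = Suc (K + q) choose q" by (rule sum_choose_lower)
    also have "\<dots> = (q + Suc K) choose Suc K"
      by (metis add.commute add_Suc_right binomial_symmetric le_add2 add_diff_cancel_left')
    finally have "(\<Sum>i\<le>q. of_nat ((q - i + K) choose K) :: real) = of_nat ((q + Suc K) choose Suc K)"
      by (metis of_nat_sum)
    thus ?thesis using True by simp
  qed simp
  finally show ?case unfolding q_def .
qed



lemma mod_add_canc: "((x::nat) + s) mod D = (j + s) mod D \<longleftrightarrow> x mod D = j mod D"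
proof -
  have "(x + s) mod D = (j + s) mod D \<longleftrightarrow> int ((x+s) mod D) = int ((j+s) mod D)" by (simp only: of_nat_eq_iff)
  also have "\<dots> \<longleftrightarrow> (int x + int s) mod int D = (int j + int s) mod int D" by (simp add: zmod_int)
  also have "\<dots> \<longleftrightarrow> int x mod int D = int j mod int D" by (simp add: mod_eq_dvd_iff)
  also have "\<dots> \<longleftrightarrow> x mod D = j mod D" by (metis of_nat_eq_iff zmod_int)
  finally show ?thesis .
qed

definition fsupp :: "real fps \<Rightarrow> nat \<Rightarrow> bool" where
  "fsupp f B \<longleftrightarrow> (\<forall>t\<ge>B. f $ t = 0)"

lemma supp_mult: assumes "fsupp f A" "fsupp g B" shows "fsupp (f * g) (A + B)"
  unfolding fsupp_def
proof (intro allI impI)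
  fix t assume t: "A + B \<le> t"
  have "(f * g) $ t = (\<Sum>i=0..t. f$i * g$(t - i))" by (rule fps_mult_nth)
  also have "\<dots> = 0"
  proof (rule sum.neutral, intro ballI)
    fix i assume "i \<in> {0..t}"
    show "f$i * g$(t - i) = 0"
    proof (cases "i \<ge> A")
      case True thus ?thesis using assms(1) by (simp add: fsupp_def)
    next
      case False
      hence "t - i \<ge> B" using t by linarith
      thus ?thesis using assms(2) by (simp add: fsupp_def)
    qed
  qed
  finally show "(f * g) $ t = 0" .
qed

lemma supp_one: "fsupp 1 1" by (simp add: fsupp_def fps_one_nth)

lemma supp_qf: "fsupp (qf a D) D" by (simp add: fsupp_def qf_def)

lemma supp_prod: "finite S \<Longrightarrow> fsupp (\<Prod>i\<in>S. qf (a i) D) (card S * D + 1)"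
proof (induction S rule: finite_induct)
  case empty thus ?case using supp_one by simp
next
  case (insert x F)
  have "fsupp (qf (a x) D * (\<Prod>i\<in>F. qf (a i) D)) (D + (card F * D + 1))"
    by (rule supp_mult[OF supp_qf insert.IH])
  thus ?case using insert by (simp add: algebra_simps)
qed

lemma supp_Xmult: "fsupp f B \<Longrightarrow> fsupp (fps_X ^ s * f) (s + B)"
  by (auto simp: fsupp_def fps_X_power_mult_nth)

lemma sum_trunc:
  assumes "\<And>t. t \<ge> B \<Longrightarrow> h t = (0::real)" "B \<le> (L::nat) + 1"
  shows "(\<Sum>t\<le>L. h t) = (\<Sum>t<B. h t)"
proof -
  have "(\<Sum>t\<le>L. h t) = (\<Sum>t\<in>{..<B}. h t)"
  proof (rule sum.mono_neutral_cong_right)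
    show "{..<B} \<subseteq> {..L}"
    proof
      fix x assume "x \<in> {..<B}"
      hence "x < B" by simp
      thus "x \<in> {..L}" using assms(2) by simp
    qed
    show "\<forall>i\<in>{..L} - {..<B}. h i = 0" using assms(1) by auto
  qed auto
  thus ?thesis by simp
qed

definition Rs :: "nat \<Rightarrow> nat \<Rightarrow> real fps \<Rightarrow> nat \<Rightarrow> real" where
  "Rs D L f j = (\<Sum>t\<le>L. if t mod D = j mod D then f $ t else 0)"

lemma Rs_extend:
  assumes "fsupp f B" "B \<le> L1 + 1" "B \<le> L2 + 1"
  shows "(\<Sum>t\<le>L1. if t mod D = j mod D then f $ t else 0) = (\<Sum>t\<le>L2. if t mod D = j mod D then f $ t else 0)"
proof -
  have z: "\<And>t. t \<ge> B \<Longrightarrow> (if t mod D = j mod D then f $ t else 0) = 0" using assms(1) by (simp add: fsupp_def)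
  show ?thesis using sum_trunc[OF z assms(2)] sum_trunc[OF z assms(3)] by simp
qed

lemma sum_shift_aux:
  "(\<Sum>t\<le>s + (d::nat). if t < s then 0 else g (t - s)) = (\<Sum>t\<le>d. (g t :: real))"
proof (induction d)
  case 0
  have "(\<Sum>t\<le>s. if t < s then 0 else g (t - s)) = (\<Sum>t<s. if t < s then 0 else g (t - s)) + g 0"
    by (simp add: lessThan_Suc_atMost[symmetric])
  also have "(\<Sum>t<s. if t < s then 0 else g (t - s)) = 0" by simp
  finally show ?case by simp
next
  case (Suc d)
  have "(\<Sum>t\<le>s + Suc d. if t < s then 0 else g (t - s)) = (\<Sum>t\<le>s + d. if t < s then 0 else g (t - s)) + g (Suc d)"
    by (simp add: add_Suc_right)
  thus ?case using Suc by simp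
qed

lemma Rs_shift:
  assumes "fsupp f B" "s + B \<le> L + 1" "s \<le> L"
  shows "Rs D L (fps_X ^ s * f) (j + s) = Rs D L f j"
proof -
  define g where "g t = (if t mod D = j mod D then f $ t else 0)" for t
  have "Rs D L (fps_X ^ s * f) (j + s) = (\<Sum>t\<le>s + (L - s). if t < s then 0 else g (t - s))"
    unfolding Rs_def
  proof (rule sum.cong)
    show "{..L} = {..s + (L - s)}" using assms by simp
  next
    fix t assume "t \<in> {..s + (L - s)}"
    show "(if t mod D = (j + s) mod D then (fps_X ^ s * f) $ t else 0) = (if t < s then 0 else g (t - s))"
    proof (cases "t < s")
      case True thus ?thesis by (simp add: fps_X_power_mult_nth)
    next
      case False
      hence "t = (t - s) + s" by simp
      hence "t mod D = (j + s) mod D \<longleftrightarrow> (t - s) mod D = j mod D"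
        by (metis mod_add_canc)
      thus ?thesis using False by (simp add: fps_X_power_mult_nth g_def)
    qed
  qed
  also have "\<dots> = (\<Sum>t\<le>L - s. g t)" by (rule sum_shift_aux)
  also have "\<dots> = Rs D L f j" unfolding g_def Rs_def
    by (rule Rs_extend[OF assms(1)]) (use assms in auto)
  finally show ?thesis .
qed

lemma Rs_per: "Rs D L f (j + D) = Rs D L f j"
  by (simp add: Rs_def)

lemma Rs_diff: "Rs D L (f - g) j = Rs D L f j - Rs D L g j"
  unfolding Rs_def sum_subtractf[symmetric] by (rule sum.cong) auto

lemma period_gcd:
  fixes \<phi> :: "nat \<Rightarrow> real"
  assumes fin: "finite A" and per: "\<And>s j. s \<in> A \<Longrightarrow> \<phi> (j + s) = \<phi> j"
  shows "\<phi> (j + Gcd A) = \<phi> j"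
proof -
  define P where "P s \<longleftrightarrow> (\<forall>j. \<phi> (j + s) = \<phi> j)" for s
  have add: "P (s + t)" if "P s" "P t" for s t
    using that unfolding P_def by (metis add.assoc)
  have mul: "P (s * m)" if "P s" for s m
  proof (induction m)
    case 0 thus ?case by (simp add: P_def)
  next
    case (Suc m) thus ?case using add[OF Suc that] by (simp add: algebra_simps)
  qed
  have sub: "P (s - t)" if "P s" "P t" "t \<le> s" for s t
    unfolding P_def
  proof
    fix j
    have "\<phi> (j + (s - t)) = \<phi> (j + (s - t) + t)" using that(2) unfolding P_def by simp
    also have "\<dots> = \<phi> (j + s)" using that(3) by simp
    also have "\<dots> = \<phi> j" using that(1) unfolding P_def by simp
    finally show "\<phi> (j + (s - t)) = \<phi> j" .
  qed
  have g: "P (gcd s t)" if "P s" "P t" for s t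
  proof (cases "s = 0")
    case True thus ?thesis using that by simp
  next
    case False
    then obtain x y where xy: "s * x = t * y + gcd s t" using bezout_nat by blast
    have le: "t * y \<le> s * x" using xy by simp
    have "P (s * x - t * y)" by (rule sub[OF mul[OF that(1)] mul[OF that(2)] le])
    moreover have "s * x - t * y = gcd s t" using xy by simp
    ultimately show ?thesis by simp
  qed
  have "A \<subseteq> A \<Longrightarrow> P (Gcd A)" using fin
  proof (induction A rule: finite_subset_induct[where A = A])
    case empty thus ?case by (simp add: P_def)
  next
    case (insert a F) thus ?case using g per unfolding P_def by (simp add: Gcd_insert)
  qed
  thus ?thesis unfolding P_def by simp
qed



definition G :: "nat \<Rightarrow> real \<Rightarrow> real" where
  "G K x = (\<Prod>i=0..<K. x + real K - real i) / fact K"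

lemma G_binom: "real ((q + K) choose K) = G K (real q)"
  unfolding binomial_gbinomial gbinomial_prod_rev G_def by (simp add: algebra_simps)

lemma G_nonneg: "0 \<le> x \<Longrightarrow> 0 \<le> G K x"
  unfolding G_def by (intro divide_nonneg_pos prod_nonneg) auto

lemma G_mono: "0 \<le> x \<Longrightarrow> x \<le> y \<Longrightarrow> G K x \<le> G K y"
  unfolding G_def by (intro divide_right_mono prod_mono) auto

lemma prod_nonneg_coeff:
  "finite S \<Longrightarrow> (\<And>i t. i \<in> S \<Longrightarrow> 0 \<le> f i $ t) \<Longrightarrow> 0 \<le> (\<Prod>i\<in>S. f i :: real fps) $ t"
proof (induction S arbitrary: t rule: finite_induct)
  case empty thus ?case by (simp add: fps_one_nth)
next
  case (insert x F)
  show ?case using insert by (simp add: fps_mult_nth sum_nonneg)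
qed

lemma prod_coeff0:
  "finite S \<Longrightarrow> (\<Prod>i\<in>S. f i :: real fps) $ 0 = (\<Prod>i\<in>S. f i $ 0)"
  by (induction S rule: finite_induct) auto

locale psetup =
  fixes a :: "nat \<Rightarrow> nat" and k D :: nat
  assumes D: "0 < D" and ai: "\<And>i. i \<in> {1..k} \<Longrightarrow> 0 < a i \<and> a i dvd D"
    and g1: "Gcd (a ` {1..k}) = 1" and k1: "1 \<le> k"
begin

definition "Q = (\<Prod>i\<in>{1..k}. qf (a i) D)"
definition "L = (k + 2) * D"
definition "F = (\<Prod>i\<in>{1..k}. inverse (1 - fps_X ^ a i :: real fps))"
definition "c = Rs D L Q 0"

lemma F_eq: "F = Q * inverse (1 - fps_X ^ D) ^ k"
proof -
  have "F = (\<Prod>i\<in>{1..k}. qf (a i) D * inverse (1 - fps_X ^ D))"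
    unfolding F_def
  proof (rule prod.cong[OF refl])
    fix i assume i: "i \<in> {1..k}"
    show "inverse (1 - fps_X ^ a i :: real fps) = qf (a i) D * inverse (1 - fps_X ^ D)"
      using ai[OF i] D by (intro inv_qf) auto
  qed
  also have "\<dots> = Q * inverse (1 - fps_X ^ D) ^ k"
    by (simp add: prod.distrib Q_def)
  finally show ?thesis .
qed

lemma Q_nonneg: "0 \<le> Q $ t"
  unfolding Q_def by (rule prod_nonneg_coeff) (auto simp: qf_def)

lemma Q_0: "Q $ 0 = 1"
  unfolding Q_def by (simp add: prod_coeff0 qf_def D)

lemma Q_supp: "fsupp Q (k * D + 1)"
  unfolding Q_def using supp_prod[of "{1..k}" a D] by simp

lemma Q_per: assumes i: "i \<in> {1..k}" shows "Rs D L Q (j + a i) = Rs D L Q j"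
proof -
  define Qi where "Qi = (\<Prod>l\<in>{1..k} - {i}. qf (a l) D)"
  have QQ: "Q = qf (a i) D * Qi" unfolding Q_def Qi_def by (rule prod.remove[OF _ i]) simp
  have ad: "0 < a i" "a i dvd D" using ai[OF i] by auto
  have aD: "a i \<le> D" using ad D by (simp add: dvd_imp_le)
  have "Q - fps_X ^ a i * Q = (1 - fps_X ^ a i) * qf (a i) D * Qi" unfolding QQ by (simp add: algebra_simps)
  also have "\<dots> = Qi - fps_X ^ D * Qi" unfolding qf_mult[OF ad D] by (simp add: algebra_simps)
  finally have eq: "Q - fps_X ^ a i * Q = Qi - fps_X ^ D * Qi" .
  have cs: "card ({1..k} - {i}) = k - 1" using i by simp
  have sQi: "fsupp Qi ((k - 1) * D + 1)" unfolding Qi_def using supp_prod[of "{1..k} - {i}" a D] cs by simp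
  have kD: "(k - 1) * D + D = k * D" using k1 by (cases k) auto
  have LL: "L = k * D + 2 * D" by (simp add: L_def algebra_simps)
  have s1: "Rs D L (fps_X ^ a i * Q) (j + a i) = Rs D L Q j"
  proof (rule Rs_shift[OF Q_supp])
    show "a i + (k * D + 1) \<le> L + 1" using aD LL by linarith
    show "a i \<le> L" using aD LL by linarith
  qed
  have s2: "Rs D L (fps_X ^ D * Qi) ((j + a i) + D) = Rs D L Qi (j + a i)"
  proof (rule Rs_shift[OF sQi])
    show "D + ((k - 1) * D + 1) \<le> L + 1" using kD LL by linarith
    show "D \<le> L" using LL by linarith
  qed
  have "Rs D L Q (j + a i) - Rs D L Q j = Rs D L (Q - fps_X ^ a i * Q) (j + a i)"
    by (simp add: Rs_diff s1)
  also have "\<dots> = Rs D L Qi (j + a i) - Rs D L (fps_X ^ D * Qi) (j + a i)"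
    unfolding eq Rs_diff ..
  also have "\<dots> = 0" using s2 Rs_per[of D L "fps_X ^ D * Qi" "j + a i"] by simp
  finally show ?thesis by simp
qed

lemma Q_unif: "Rs D L Q j = c"
proof -
  have step: "Rs D L Q (j + 1) = Rs D L Q j" for j
  proof -
    have h: "\<And>s j. s \<in> a ` {1..k} \<Longrightarrow> Rs D L Q (j + s) = Rs D L Q j" using Q_per by auto
    show ?thesis using period_gcd[of "a ` {1..k}" "Rs D L Q", OF _ h] g1 by simp
  qed
  show ?thesis unfolding c_def by (induction j) (use step in auto)
qed

lemma c_pos: "1 \<le> c"
proof -
  have "Q $ 0 \<le> Rs D L Q 0"
    unfolding Rs_def
    using member_le_sum[of 0 "{..L}" "\<lambda>t. if t mod D = 0 mod D then Q $ t else 0"] Q_nonneg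
    by auto
  thus ?thesis using Q_0 c_def by simp
qed

end



context psetup
begin

lemma W_nth': "(inverse (1 - fps_X ^ D :: real fps) ^ k) $ m = (if D dvd m then G (k-1) (real (m div D)) else 0)"
proof -
  have kk: "k = Suc (k - 1)" using k1 by simp
  show ?thesis using W_nth[OF D, of "k-1" m] G_binom[of "m div D" "k-1"] by (subst kk) (simp only: kk[symmetric])
qed

lemma W_nonneg: "0 \<le> (inverse (1 - fps_X ^ D :: real fps) ^ k) $ m"
  by (simp add: W_nth' G_nonneg)

lemma F_nth: "F $ m = (\<Sum>t=0..m. Q $ t * (inverse (1 - fps_X ^ D :: real fps) ^ k) $ (m - t))"
  by (simp add: F_eq fps_mult_nth)

lemma F_nonneg: "0 \<le> F $ m"
  unfolding F_nth by (intro sum_nonneg mult_nonneg_nonneg Q_nonneg W_nonneg)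

lemma upper: "F $ m \<le> c * G (k-1) (real m / real D)"
proof -
  let ?W = "inverse (1 - fps_X ^ D :: real fps) ^ k"
  let ?g = "G (k-1) (real m / real D)"
  let ?h = "\<lambda>t. if t mod D = m mod D then Q $ t else 0"
  have gnn: "0 \<le> ?g" by (rule G_nonneg) simp
  have "F $ m \<le> (\<Sum>t=0..m. ?h t * ?g)"
    unfolding F_nth
  proof (rule sum_mono)
    fix t assume "t \<in> {0..m}" hence tm: "t \<le> m" by simp
    show "Q $ t * ?W $ (m - t) \<le> ?h t * ?g"
    proof (cases "D dvd (m - t)")
      case True
      hence md: "t mod D = m mod D" using tm mod_eq_dvd_iff_nat[OF tm, of D] by simp
      have "real ((m - t) div D) = real (m - t) / real D" by (rule real_of_nat_div[OF True])
      also have "\<dots> \<le> real m / real D" using D tm by (intro divide_right_mono) auto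
      finally have "G (k-1) (real ((m - t) div D)) \<le> ?g" by (intro G_mono) auto
      thus ?thesis using True md Q_nonneg[of t] by (simp add: W_nth' mult_left_mono)
    next
      case False
      thus ?thesis using Q_nonneg[of t] gnn by (simp add: W_nth')
    qed
  qed
  also have "\<dots> = ?g * (\<Sum>t\<le>m. ?h t)" by (simp add: sum_distrib_left atMost_atLeast0 mult.commute)
  also have "(\<Sum>t\<le>m. ?h t) \<le> c"
  proof -
    have "(\<Sum>t\<le>m. ?h t) \<le> (\<Sum>t\<le>max m L. ?h t)"
      by (rule sum_mono2) (auto simp: Q_nonneg)
    also have "\<dots> = Rs D L Q m" unfolding Rs_def
      by (rule Rs_extend[OF Q_supp]) (auto simp: L_def)
    also have "\<dots> = c" by (rule Q_unif)
    finally show ?thesis .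
  qed
  hence "?g * (\<Sum>t\<le>m. ?h t) \<le> ?g * c" using gnn by (rule mult_left_mono)
  finally show ?thesis by (simp add: mult.commute)
qed

lemma lower: assumes m: "k * D \<le> m" shows "c * G (k-1) (real m / real D - real k) \<le> F $ m"
proof -
  let ?W = "inverse (1 - fps_X ^ D :: real fps) ^ k"
  let ?g = "G (k-1) (real m / real D - real k)"
  let ?h = "\<lambda>t. if t mod D = m mod D then Q $ t else 0"
  have kmD: "real k \<le> real m / real D" using m D by (simp add: le_divide_eq) (metis of_nat_le_iff of_nat_mult)
  have gnn: "0 \<le> ?g" by (rule G_nonneg) (use kmD in simp)
  have "(\<Sum>t\<le>m. ?h t) = Rs D L Q m" unfolding Rs_def
    by (rule Rs_extend[OF Q_supp]) (use m in \<open>auto simp: L_def\<close>)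
  hence hs: "(\<Sum>t\<le>m. ?h t) = c" using Q_unif by simp
  have "c * ?g = (\<Sum>t=0..m. ?h t * ?g)"
    by (simp add: hs[symmetric] sum_distrib_right atMost_atLeast0)
  also have "\<dots> \<le> F $ m"
    unfolding F_nth
  proof (rule sum_mono)
    fix t assume "t \<in> {0..m}" hence tm: "t \<le> m" by simp
    show "?h t * ?g \<le> Q $ t * ?W $ (m - t)"
    proof (cases "t mod D = m mod D")
      case True
      hence dv: "D dvd (m - t)" using mod_eq_dvd_iff_nat[OF tm, of D] by simp
      show ?thesis
      proof (cases "t \<le> k * D")
        case True
        have tk: "real t \<le> real k * real D" using True by (metis of_nat_le_iff of_nat_mult)
        have "real m / real D - real k = (real m - real (k * D)) / real D" using D by (simp add: field_simps)
        also have "\<dots> \<le> real (m - t) / real D" using D tm tk by (intro divide_right_mono) auto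
        also have "\<dots> = real ((m - t) div D)" by (rule real_of_nat_div[OF dv, symmetric])
        finally have "?g \<le> G (k-1) (real ((m - t) div D))" by (intro G_mono) (use kmD in auto)
        thus ?thesis using dv \<open>t mod D = m mod D\<close> Q_nonneg[of t] by (simp add: W_nth' mult_left_mono)
      next
        case False
        hence "Q $ t = 0" using Q_supp by (simp add: fsupp_def)
        thus ?thesis by simp
      qed
    next
      case False
      thus ?thesis using Q_nonneg[of t] W_nonneg[of "m - t"] by simp
    qed
  qed
  finally show ?thesis .
qed

end

lemma key_ineq:
  fixes x y :: real and k :: nat
  assumes k: "2 \<le> k" and y: "0 < y" "y < x" and xk: "real k \<le> x" and yk: "real k * (2 * x + real k) < y ^ 2"
  shows "G (k-1) (x + y) * G (k-1) (x - y) < G (k-1) (x - real k) ^ 2"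
proof -
  define K where "K = k - 1"
  have kK: "real k = real K + 1" using k unfolding K_def by simp
  have K1: "1 \<le> K" using k unfolding K_def by simp
  define f where "f i = (x + y + real K - real i) * (x - y + real K - real i)" for i
  define g where "g i = (x - real k + real K - real i) ^ 2" for i
  have fg: "f i < g i \<and> 0 \<le> f i \<and> 0 < g i" if i: "i \<in> {0..<K}" for i
  proof -
    define s where "s = real K - real i"
    have s1: "1 \<le> s" "s \<le> real K" using i unfolding s_def by auto
    have f': "f i = (x + s) ^ 2 - y ^ 2" unfolding f_def s_def by (simp add: power2_eq_square algebra_simps)
    have g': "g i = (x + s - real k) ^ 2" unfolding g_def s_def by (simp add: algebra_simps)
    have d: "(x + s) ^ 2 - (x + s - real k) ^ 2 = real k * (2 * x + 2 * s - real k)"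
      by (simp add: power2_eq_square algebra_simps)
    have "real k * (2 * x + 2 * s - real k) \<le> real k * (2 * x + real k)"
      using s1 kK by (intro mult_left_mono) auto
    hence "f i < g i" using d f' g' yk by linarith
    moreover have "0 \<le> f i" unfolding f_def using y s1 unfolding s_def by (intro mult_nonneg_nonneg) auto
    moreover have "0 < g i" unfolding g' using s1 xk kK by (intro zero_less_power) auto
    ultimately show ?thesis by simp
  qed
  have "(\<Prod>i=0..<K. f i) < (\<Prod>i=0..<K. g i)"
    by (rule prod_mono_strict[of 0]) (use K1 fg in \<open>auto intro: less_imp_le\<close>)
  moreover have "(\<Prod>i=0..<K. f i) = (\<Prod>i=0..<K. x + y + real K - real i) * (\<Prod>i=0..<K. x - y + real K - real i)"
    unfolding f_def by (simp add: prod.distrib)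
  moreover have "(\<Prod>i=0..<K. g i) = (\<Prod>i=0..<K. x - real k + real K - real i) ^ 2"
    unfolding g_def by (simp add: prod_power_distrib)
  ultimately have "(\<Prod>i=0..<K. x + y + real K - real i) * (\<Prod>i=0..<K. x - y + real K - real i)
      < (\<Prod>i=0..<K. x - real k + real K - real i) ^ 2" by simp
  hence "(\<Prod>i=0..<K. x + y + real K - real i) * (\<Prod>i=0..<K. x - y + real K - real i) / (fact K * fact K)
      < (\<Prod>i=0..<K. x - real k + real K - real i) ^ 2 / (fact K * fact K)"
    by (intro divide_strict_right_mono) auto
  thus ?thesis unfolding G_def K_def[symmetric] by (simp add: power2_eq_square)
qed



theorem corollary3p3:
  fixes a :: "nat \<Rightarrow> nat" and u v n :: real and k :: nat
    and N0 Np Nm :: int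
  assumes pos: "\<And>i. 1 \<le> i \<Longrightarrow> 0 < a i"
    and incr: "\<And>i j. 1 \<le> i \<Longrightarrow> i \<le> j \<Longrightarrow> a i \<le> a j"
    and uv: "0 < v" "v < u"
    and k2: "2 \<le> k"
    and gcd1: "Gcd (a ` {1..k}) = 1"
    and nbig: "n > 4 * u / (real k * v ^ 2) *
                 (\<Prod>i\<in>{1..k}. 1 + real i * real (Lcm (a ` {1..k})) * real k)"
    and int0: "u * n = of_int N0"
    and intp: "u * n + v * n = of_int Np"
    and intm: "u * n - v * n = of_int Nm"
  shows "(pA a N0 k) ^ 2 > pA a Np k * pA a Nm k"
proof -
  define D where "D = Lcm (a ` {1..k})"
  have fin: "finite (a ` {1..k})" by simp
  have "0 \<notin> a ` {1..k}" using pos by force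
  hence D0: "0 < D" unfolding D_def using Lcm_0_iff_nat[OF fin] by (simp add: neq0_conv[symmetric] del: neq0_conv)
  have ai: "\<And>i. i \<in> {1..k} \<Longrightarrow> 0 < a i \<and> a i dvd D" using pos unfolding D_def by (auto intro: dvd_Lcm)
  interpret P: psetup a k D using D0 ai gcd1 k2 by unfold_locales auto
  have pAF: "\<And>N. 0 \<le> N \<Longrightarrow> pA a N k = P.F $ nat N" by (simp add: pA_def P.F_def)
  define B where "B = (\<Prod>i\<in>{1..k}. 1 + real i * real D * real k)"
  have Bk: "1 + real k * real D * real k \<le> B"
  proof -
    have kin: "k \<in> {1..k}" using k2 by simp
    have eqB: "B = (1 + real k * real D * real k) * (\<Prod>i\<in>{1..k} - {k}. 1 + real i * real D * real k)"
      unfolding B_def by (rule prod.remove[OF _ kin]) simp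
    have p1: "1 \<le> (\<Prod>i\<in>{1..k} - {k}. 1 + real i * real D * real k)" by (rule prod_ge_1) simp
    have f0: "0 \<le> 1 + real k * real D * real k" by simp
    show ?thesis using mult_left_mono[OF p1 f0] eqB by simp
  qed
  have kpos: "0 < real k" using k2 by simp
  have u0: "0 < u" using uv by simp
  have nb: "4 * u / (real k * v ^ 2) * B < n" using nbig unfolding B_def D_def .
  have nb2: "4 * u * B < n * (real k * v ^ 2)" using nb kpos uv by (simp add: field_simps)
  have "4 * u * (real k * real D * real k) < 4 * u * B" using Bk u0 by simp
  hence "real k * (4 * u * real k * real D) < real k * (n * v ^ 2)" using nb2 by (simp add: algebra_simps)
  hence nv: "4 * u * real k * real D < n * v ^ 2" using kpos by simp
  have n0: "0 < n"
  proof (rule ccontr)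
    assume "\<not> 0 < n" hence "n * v ^ 2 \<le> 0" by (simp add: mult_nonpos_nonneg)
    moreover have "0 < 4 * u * real k * real D" using u0 kpos D0 by simp
    ultimately show False using nv by simp
  qed
  have "n * v ^ 2 < n * u ^ 2" using n0 uv by (intro mult_strict_left_mono power_strict_mono) auto
  hence "u * (4 * real k * real D) < u * (u * n)" using nv by (simp add: algebra_simps power2_eq_square)
  hence un: "4 * real k * real D < u * n" using u0 by simp
  define x where "x = u * n / real D"
  define y where "y = v * n / real D"
  have Dp: "0 < real D" using D0 by simp
  define A where "A = u * n * real k * real D"
  define E where "E = (real k * real D) ^ 2"
  have h1: "4 * A < (v * n) ^ 2" using nv n0 unfolding A_def
    by (simp add: power2_eq_square algebra_simps)
  have h2: "4 * E < A"
  proof -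
    have "4 * real k * real D * (real k * real D) < u * n * (real k * real D)"
      using un kpos Dp by simp
    thus ?thesis unfolding A_def E_def by (simp add: power2_eq_square algebra_simps)
  qed
  have E0: "0 \<le> E" unfolding E_def by simp
  have eqL: "real k * (2 * (u * n) * real D + real k * real D ^ 2) = 2 * A + E"
    unfolding A_def E_def by (simp add: power2_eq_square algebra_simps)
  have main: "real k * (2 * (u * n) * real D + real k * real D ^ 2) < (v * n) ^ 2"
    unfolding eqL using h1 h2 E0 by linarith
  have yk: "real k * (2 * x + real k) < y ^ 2"
  proof -
    have "real k * (2 * x + real k) = real k * (2 * (u * n) * real D + real k * real D ^ 2) / real D ^ 2"
      unfolding x_def using Dp by (simp add: field_simps power2_eq_square)
    also have "\<dots> < (v * n) ^ 2 / real D ^ 2" using main Dp by (intro divide_strict_right_mono) auto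
    also have "\<dots> = y ^ 2" unfolding y_def by (simp add: power_divide)
    finally show ?thesis .
  qed
  have ypos: "0 < y" unfolding y_def using uv n0 Dp by simp
  have yx: "y < x" unfolding x_def y_def using uv n0 Dp by (simp add: divide_strict_right_mono)
  have kDun: "real k * real D \<le> u * n"
  proof -
    have "0 \<le> real k * real D" by simp
    thus ?thesis using un by linarith
  qed
  have xk: "real k \<le> x" unfolding x_def using kDun Dp by (simp add: le_divide_eq)
  have N0p: "0 \<le> N0" using int0 un kpos Dp
    by (metis (mono_tags) of_int_0_le_iff less_eq_real_def mult_pos_pos zero_less_numeral mult_nonneg_nonneg
        order_less_trans of_nat_0_le_iff)
  have Npp: "0 \<le> Np" using intp N0p int0 uv n0
    by (smt (verit) mult_pos_pos of_int_0_le_iff)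
  have Nmp: "0 \<le> Nm" using intm int0 uv n0 un
    by (smt (verit) mult_strict_right_mono of_int_0_le_iff)
  define m0 where "m0 = nat N0"
  define mp where "mp = nat Np"
  define mm where "mm = nat Nm"
  have rm0: "real m0 = u * n" unfolding m0_def using N0p int0 by simp
  have rmp: "real mp = u * n + v * n" unfolding mp_def using Npp intp by simp
  have rmm: "real mm = u * n - v * n" unfolding mm_def using Nmp intm by simp
  have km0: "k * D \<le> m0"
  proof -
    have "real (k * D) \<le> real m0" using rm0 un kpos Dp by simp
    thus ?thesis by (simp only: of_nat_le_iff)
  qed
  have L: "P.c * G (k-1) (x - real k) \<le> P.F $ m0"
    using P.lower[OF km0] rm0 unfolding x_def by simp
  have Up: "P.F $ mp \<le> P.c * G (k-1) (x + y)"
    using P.upper[of mp] rmp unfolding x_def y_def by (simp add: add_divide_distrib)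
  have Um: "P.F $ mm \<le> P.c * G (k-1) (x - y)"
    using P.upper[of mm] rmm unfolding x_def y_def by (simp add: diff_divide_distrib)
  have c1: "1 \<le> P.c" by (rule P.c_pos)
  have gp: "0 \<le> G (k-1) (x + y)" using ypos yx by (intro G_nonneg) simp
  have gm: "0 \<le> G (k-1) (x - y)" using yx by (intro G_nonneg) simp
  have g0: "0 \<le> G (k-1) (x - real k)" using xk by (intro G_nonneg) simp
  have K: "G (k-1) (x + y) * G (k-1) (x - y) < G (k-1) (x - real k) ^ 2"
    by (rule key_ineq[OF k2 ypos yx xk yk])
  have "P.F $ mp * P.F $ mm \<le> (P.c * G (k-1) (x + y)) * (P.c * G (k-1) (x - y))"
    using Up Um P.F_nonneg gp c1 by (intro mult_mono) auto
  also have "\<dots> = P.c ^ 2 * (G (k-1) (x + y) * G (k-1) (x - y))" by (simp add: power2_eq_square algebra_simps)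
  also have "\<dots> < P.c ^ 2 * G (k-1) (x - real k) ^ 2" using K c1 by (intro mult_strict_left_mono) auto
  also have "\<dots> = (P.c * G (k-1) (x - real k)) ^ 2" by (simp add: power_mult_distrib)
  also have "\<dots> \<le> (P.F $ m0) ^ 2" using L c1 g0 by (intro power_mono) auto
  finally have "P.F $ mp * P.F $ mm < (P.F $ m0) ^ 2" .
  thus ?thesis using pAF N0p Npp Nmp unfolding m0_def mp_def mm_def by simp
qed


end
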